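(* Let $N\ge 2$ and let $r:\{0,\dots,N-1\}\to\{0,\dots,N-1\}$ be $r(k)=N-1-k$. Let $\pi$ be a permutation of $\{0,\dots,N-1\}$ with $\pi\circ r=r\circ\pi$ and $\pi(0)\in\{0,N-1\}$, and let $\rho\in\{\pi,\ r\circ\pi\}$. For a partial $N\times N$ array $A$ (some cells filled with symbols from $\{0,\dots,N-1\}$) whose first row is completely filled with a permutation of $\{0,\dots,N-1\}$, define the partial array $T(A)$ by $T(A)[\pi(i)][\rho(j)]=A[i][j]$ (cell $(\pi(i),\rho(j))$ of $T(A)$ is filled iff cell $(i,j)$ of $A$ is filled), and define $\mu(A)=\tau\circ T(A)$, where $\tau$ is the unique permutation of the symbols $\{0,\dots,N-1\}$ such that the first row of $\tau\circ T(A)$ is $0,1,\dots,N-1$ (i.e. every filled entry $x$ is replaced by $\tau(x)$). Let $H_1$ and $H_2$ be hourglass designs of order $N$ with $H_2=\mu(H_1)$. Then the number of normalized diagonal Latin squares of order $N$ that agree with $H_1$ on all filled cells of $H_1$ equals the number of normalized diagonal Latin squares of order $N$ that agree with $H_2$ on all filled cells of $H_2$.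
   Context: A diagonal Latin square of order $N$ is an $N\times N$ array with entries in $\{0,\dots,N-1\}$ such that every row, every column, the main diagonal (cells $(i,i)$) and the main antidiagonal (cells $(i,N-1-i)$) each contain every element of $\{0,\dots,N-1\}$ exactly once; rows and columns are indexed $0,\dots,N-1$. It is normalized if its first row (row $0$) is $0,1,\dots,N-1$ in this order. A hourglass design of order $N$ is a partial $N\times N$ array in which exactly the cells of row $0$, row $N-1$, the main diagonal and the main antidiagonal are filled with symbols from $\{0,\dots,N-1\}$, the first row is $0,1,\dots,N-1$, and no symbol occurs twice among the filled cells of any row, any column, the main diagonal, or the main antidiagonal. *)

theory Defs
  imports Main
begin

(* Full squares: lists of N rows, each of length N. Partial arrays: nat => nat => nat option,
   None = empty cell. Rows/columns indexed 0..N-1. *)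

definition diag_latin :: "nat \<Rightarrow> nat list list \<Rightarrow> bool" where
  "diag_latin N L \<longleftrightarrow>
     length L = N \<and> (\<forall>i<N. length (L ! i) = N) \<and>
     (\<forall>i<N. bij_betw (\<lambda>j. L ! i ! j) {0..<N} {0..<N}) \<and>
     (\<forall>j<N. bij_betw (\<lambda>i. L ! i ! j) {0..<N} {0..<N}) \<and>
     bij_betw (\<lambda>i. L ! i ! i) {0..<N} {0..<N} \<and>
     bij_betw (\<lambda>i. L ! i ! (N - 1 - i)) {0..<N} {0..<N}"

definition normalized :: "nat \<Rightarrow> nat list list \<Rightarrow> bool" where
  "normalized N L \<longleftrightarrow> (\<forall>j<N. L ! 0 ! j = j)"

type_synonym parray = "nat \<Rightarrow> nat \<Rightarrow> nat option"

definition partial_array :: "nat \<Rightarrow> parray \<Rightarrow> bool" where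
  "partial_array N A \<longleftrightarrow>
     (\<forall>i j. (N \<le> i \<or> N \<le> j) \<longrightarrow> A i j = None) \<and>
     (\<forall>i j x. A i j = Some x \<longrightarrow> x < N)"

definition hourglass :: "nat \<Rightarrow> parray \<Rightarrow> bool" where
  "hourglass N H \<longleftrightarrow>
     partial_array N H \<and>
     (\<forall>i<N. \<forall>j<N. (H i j \<noteq> None \<longleftrightarrow> (i = 0 \<or> i = N - 1 \<or> j = i \<or> j = N - 1 - i))) \<and>
     (\<forall>j<N. H 0 j = Some j) \<and>
     (\<forall>i j j' x. H i j = Some x \<and> H i j' = Some x \<longrightarrow> j = j') \<and>
     (\<forall>i i' j x. H i j = Some x \<and> H i' j = Some x \<longrightarrow> i = i') \<and>
     (\<forall>i i' x. H i i = Some x \<and> H i' i' = Some x \<longrightarrow> i = i') \<and>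
     (\<forall>i i' x. i < N \<and> i' < N \<and> H i (N - 1 - i) = Some x \<and> H i' (N - 1 - i') = Some x
        \<longrightarrow> i = i')"

definition agrees :: "nat \<Rightarrow> parray \<Rightarrow> nat list list \<Rightarrow> bool" where
  "agrees N A L \<longleftrightarrow> (\<forall>i<N. \<forall>j<N. \<forall>x. A i j = Some x \<longrightarrow> L ! i ! j = x)"

(* T(A)[pi i][rho j] = A[i][j] *)
definition Tmap :: "nat \<Rightarrow> (nat \<Rightarrow> nat) \<Rightarrow> (nat \<Rightarrow> nat) \<Rightarrow> parray \<Rightarrow> parray" where
  "Tmap N \<pi> \<rho> A p q =
     (if p < N \<and> q < N then A (the_inv_into {0..<N} \<pi> p) (the_inv_into {0..<N} \<rho> q) else None)"

definition relabel_tau :: "nat \<Rightarrow> parray \<Rightarrow> nat \<Rightarrow> nat" where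
  "relabel_tau N B x = (THE j. j < N \<and> B 0 j = Some x)"

definition mu :: "nat \<Rightarrow> (nat \<Rightarrow> nat) \<Rightarrow> (nat \<Rightarrow> nat) \<Rightarrow> parray \<Rightarrow> parray" where
  "mu N \<pi> \<rho> A i j = map_option (relabel_tau N (Tmap N \<pi> \<rho> A)) (Tmap N \<pi> \<rho> A i j)"

definition count_ndls :: "nat \<Rightarrow> parray \<Rightarrow> nat" where
  "count_ndls N H = card {L. diag_latin N L \<and> normalized N L \<and> agrees N H L}"

end

theory Submission
  imports Defs
begin

definition sq :: "nat \<Rightarrow> (nat \<Rightarrow> nat \<Rightarrow> nat) \<Rightarrow> nat list list" where
  "sq N f = map (\<lambda>i. map (\<lambda>j. f i j) [0..<N]) [0..<N]"

lemma sq_nth: "i < N \<Longrightarrow> j < N \<Longrightarrow> sq N f ! i ! j = f i j"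
  by (simp add: sq_def)

lemma sq_len: "length (sq N f) = N" "i < N \<Longrightarrow> length (sq N f ! i) = N"
  by (simp_all add: sq_def)

lemma sq_eq:
  assumes "length L = N" "\<forall>i<N. length (L!i) = N" "\<forall>i<N. \<forall>j<N. L!i!j = f i j"
  shows "sq N f = L"
  apply (rule nth_equalityI)
   apply (simp add: sq_len assms)
  apply (rule nth_equalityI)
  using assms by (auto simp: sq_len sq_nth)

lemma comp3:
  assumes "bij_betw s S S" "bij_betw g S S" "bij_betw a S S"
    and "\<forall>x\<in>S. h x = s (g (a x))"
  shows "bij_betw h S S"
proof -
  have 1: "bij_betw (s \<circ> (g \<circ> a)) S S"
    by (rule bij_betw_trans[OF bij_betw_trans[OF assms(3) assms(2)] assms(1)])
  have "bij_betw h S S = bij_betw (s \<circ> (g \<circ> a)) S S"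
    by (rule bij_betw_cong) (simp add: assms(4))
  then show ?thesis using 1 by simp
qed

lemma diag_transform:
  assumes L: "diag_latin N L"
    and s: "bij_betw s {0..<N} {0..<N}"
    and a: "bij_betw a {0..<N} {0..<N}"
    and b: "bij_betw b {0..<N} {0..<N}"
    and ar: "\<forall>k<N. a (N - 1 - k) = N - 1 - a k"
    and ab: "(\<forall>k<N. b k = a k) \<or> (\<forall>k<N. b k = N - 1 - a k)"
  shows "diag_latin N (sq N (\<lambda>i j. s (L!(a i)!(b j))))"
proof -
  let ?S = "{0..<N}"
  have aS: "\<And>k. k < N \<Longrightarrow> a k < N" using a by (auto simp: bij_betw_def)
  have bS: "\<And>k. k < N \<Longrightarrow> b k < N" using b by (auto simp: bij_betw_def)
  have br: "\<forall>k<N. b (N - 1 - k) = N - 1 - b k"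
    using ab
  proof
    assume h: "\<forall>k<N. b k = a k"
    show ?thesis using h ar by simp
  next
    assume h: "\<forall>k<N. b k = N - 1 - a k"
    show ?thesis
    proof (intro allI impI)
      fix k assume k: "k < N"
      have "a k < N" using aS k by simp
      thus "b (N - 1 - k) = N - 1 - b k" using h ar k by simp
    qed
  qed
  have rows: "\<forall>i<N. bij_betw (\<lambda>j. L ! i ! j) ?S ?S"
    and cols: "\<forall>j<N. bij_betw (\<lambda>i. L ! i ! j) ?S ?S"
    and dg: "bij_betw (\<lambda>i. L ! i ! i) ?S ?S"
    and ad: "bij_betw (\<lambda>i. L ! i ! (N - 1 - i)) ?S ?S"
    using L by (auto simp: diag_latin_def)
  show ?thesis
    unfolding diag_latin_def
  proof (intro conjI allI impI)
    show "length (sq N (\<lambda>i j. s (L ! a i ! b j))) = N" by (simp add: sq_len)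
  next
    fix i assume "i < N"
    thus "length (sq N (\<lambda>i j. s (L ! a i ! b j)) ! i) = N" by (simp add: sq_len)
  next
    fix i assume i: "i < N"
    show "bij_betw (\<lambda>j. sq N (\<lambda>i j. s (L ! a i ! b j)) ! i ! j) ?S ?S"
      by (rule comp3[OF s rows[rule_format, OF aS[OF i]] b]) (simp add: sq_nth i)
  next
    fix j assume j: "j < N"
    show "bij_betw (\<lambda>i. sq N (\<lambda>i j. s (L ! a i ! b j)) ! i ! j) ?S ?S"
      by (rule comp3[OF s cols[rule_format, OF bS[OF j]] a]) (simp add: sq_nth j)
  next
    show "bij_betw (\<lambda>i. sq N (\<lambda>i j. s (L ! a i ! b j)) ! i ! i) ?S ?S"
      using ab
    proof
      assume h: "\<forall>k<N. b k = a k"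
      show ?thesis by (rule comp3[OF s dg a]) (simp add: sq_nth h)
    next
      assume h: "\<forall>k<N. b k = N - 1 - a k"
      show ?thesis by (rule comp3[OF s ad a]) (simp add: sq_nth h)
    qed
  next
    show "bij_betw (\<lambda>i. sq N (\<lambda>i j. s (L ! a i ! b j)) ! i ! (N - 1 - i)) ?S ?S"
      using ab
    proof
      assume h: "\<forall>k<N. b k = a k"
      show ?thesis by (rule comp3[OF s ad a]) (use ar in \<open>auto simp: sq_nth h\<close>)
    next
      assume h: "\<forall>k<N. b k = N - 1 - a k"
      have "\<And>x. x < N \<Longrightarrow> b (N - 1 - x) = a x"
        using h ar aS by (simp add: Suc_leI diff_diff_cancel)
      then show ?thesis by (rule_tac comp3[OF s dg a]) (simp add: sq_nth)
    qed
  qed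
qed

lemma inv_facts:
  fixes f :: "nat \<Rightarrow> nat" and N :: nat
  assumes "bij_betw f {0..<N} {0..<N}"
  shows "\<forall>k<N. the_inv_into {0..<N} f k < N"
    "\<forall>k<N. f (the_inv_into {0..<N} f k) = k"
    "\<forall>k<N. the_inv_into {0..<N} f (f k) = k"
    "\<forall>k<N. f k < N"
    "bij_betw (the_inv_into {0..<N} f) {0..<N} {0..<N}"
    "inj_on f {0..<N}"
proof -
  have i: "inj_on f {0..<N}" using assms by (rule bij_betw_imp_inj_on)
  have im: "f ` {0..<N} = {0..<N}" using assms by (rule bij_betw_imp_surj_on)
  have b: "bij_betw (the_inv_into {0..<N} f) {0..<N} {0..<N}" using bij_betw_the_inv_into[OF assms] .
  show "bij_betw (the_inv_into {0..<N} f) {0..<N} {0..<N}" by (rule b)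
  show "\<forall>k<N. the_inv_into {0..<N} f k < N"
  proof (intro allI impI)
    fix k assume "k < N"
    then have "k \<in> {0..<N}" by simp
    then have "the_inv_into {0..<N} f k \<in> {0..<N}" by (rule bij_betwE[OF b, rule_format])
    then show "the_inv_into {0..<N} f k < N" by simp
  qed
  show "\<forall>k<N. f (the_inv_into {0..<N} f k) = k"
  proof (intro allI impI)
    fix k assume "k < N"
    then have "k \<in> f ` {0..<N}" using im by simp
    then show "f (the_inv_into {0..<N} f k) = k" by (rule f_the_inv_into_f[OF i])
  qed
  show "\<forall>k<N. the_inv_into {0..<N} f (f k) = k"
  proof (intro allI impI)
    fix k assume "k < N"
    then have "k \<in> {0..<N}" by simp
    then show "the_inv_into {0..<N} f (f k) = k" by (rule the_inv_into_f_f[OF i])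
  qed
  show "\<forall>k<N. f k < N"
  proof (intro allI impI)
    fix k assume "k < N"
    then have "k \<in> {0..<N}" by simp
    then have "f k \<in> {0..<N}" by (rule bij_betwE[OF assms, rule_format])
    then show "f k < N" by simp
  qed
  show "inj_on f {0..<N}" by (rule i)
qed

lemma rbij: "bij_betw (\<lambda>k. (N::nat) - 1 - k) {0..<N} {0..<N}"
proof (rule bij_betw_byWitness[where f'="\<lambda>k. N - 1 - k"])
  have "\<And>a. a < N \<Longrightarrow> N - 1 - (N - 1 - a) = a" by linarith
  then show "\<forall>a\<in>{0..<N}. N - 1 - (N - 1 - a) = a" "\<forall>a\<in>{0..<N}. N - 1 - (N - 1 - a) = a" by auto
  have "\<And>a. a < N \<Longrightarrow> N - 1 - a < N" by linarith
  then show "(\<lambda>k. N - 1 - k) ` {0..<N} \<subseteq> {0..<N}" "(\<lambda>k. N - 1 - k) ` {0..<N} \<subseteq> {0..<N}" by auto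
qed

lemma agrees_norm:
  fixes N :: nat
  assumes hg: "hourglass N H" and ag: "agrees N H L"
  shows "normalized N L"
  unfolding normalized_def
proof (intro allI impI)
  fix j assume j: "j < N"
  have "H 0 j = Some j" using hg j unfolding hourglass_def by blast
  moreover have "0 < N" using j by simp
  ultimately show "L ! 0 ! j = j" using ag j unfolding agrees_def by blast
qed

theorem proposition1:
  fixes N :: nat and \<pi> \<rho> :: "nat \<Rightarrow> nat" and H1 H2 :: parray
  assumes "N \<ge> 2"
    and "bij_betw \<pi> {0..<N} {0..<N}"
    and "\<forall>k<N. \<pi> (N - 1 - k) = N - 1 - \<pi> k"
    and "\<pi> 0 = 0 \<or> \<pi> 0 = N - 1"
    and "\<rho> = \<pi> \<or> \<rho> = (\<lambda>k. N - 1 - \<pi> k)"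
    and "hourglass N H1" and "hourglass N H2"
    and "H2 = mu N \<pi> \<rho> H1"
  shows "count_ndls N H1 = count_ndls N H2"
proof -
  note N = assms(1) and pb = assms(2) and pr = assms(3) and p0 = assms(4) and rho = assms(5)
    and hg1 = assms(6) and hg2 = assms(7) and H2 = assms(8)
  let ?S = "{0..<N}"
  define pi where "pi = the_inv_into ?S \<pi>"
  define ri where "ri = the_inv_into ?S \<rho>"
  note pf = inv_facts[OF pb, folded pi_def]
  have rb: "bij_betw \<rho> ?S ?S"
    using rho
  proof
    assume "\<rho> = \<pi>" then show ?thesis using pb by simp
  next
    assume h: "\<rho> = (\<lambda>k. N - 1 - \<pi> k)"
    show ?thesis by (rule comp3[OF rbij pb bij_betw_id]) (simp add: h)
  qed
  note rf = inv_facts[OF rb, folded ri_def]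
  have rel: "(\<forall>k<N. \<rho> k = \<pi> k) \<or> (\<forall>k<N. \<rho> k = N - 1 - \<pi> k)"
    using rho by auto
  have pir: "\<forall>k<N. pi (N - 1 - k) = N - 1 - pi k"
  proof (intro allI impI)
    fix k assume k: "k < N"
    have "pi k < N" using pf k by auto
    moreover have "\<pi> (N - 1 - pi k) = N - 1 - k" using pr pf k \<open>pi k < N\<close> by auto
    ultimately show "pi (N - 1 - k) = N - 1 - pi k"
      unfolding pi_def by (intro the_inv_into_f_eq[OF pf(6)]) auto
  qed
  have rirel: "(\<forall>k<N. ri k = pi k) \<or> (\<forall>k<N. ri k = N - 1 - pi k)"
    using rho
  proof
    assume "\<rho> = \<pi>" then show ?thesis by (simp add: ri_def pi_def)
  next
    assume h: "\<rho> = (\<lambda>k. N - 1 - \<pi> k)"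
    have "\<forall>k<N. ri k = N - 1 - pi k"
    proof (intro allI impI)
      fix k assume k: "k < N"
      have pk: "pi k < N" using pf k by auto
      have "\<pi> (N - 1 - pi k) = N - 1 - k" using pr pf k pk by auto
      then have "\<rho> (N - 1 - pi k) = k" using h k by simp
      moreover have "N - 1 - pi k \<in> ?S" using k by auto
      ultimately show "ri k = N - 1 - pi k"
        unfolding ri_def by (intro the_inv_into_f_eq[OF rf(6)])
    qed
    then show ?thesis by simp
  qed
  have N0: "0 < N" using N by simp
  have r0: "pi 0 = 0 \<or> pi 0 = N - 1"
    using p0
  proof
    assume "\<pi> 0 = 0"
    then show ?thesis unfolding pi_def using N0 by (intro disjI1 the_inv_into_f_eq[OF pf(6)]) auto
  next
    assume h: "\<pi> 0 = N - 1"
    have "\<pi> (N - 1) = 0" using pr[rule_format, of 0] N0 h by simp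
    then show ?thesis unfolding pi_def using N0 by (intro disjI2 the_inv_into_f_eq[OF pf(6)]) auto
  qed
  have pa1: "\<And>i j x. H1 i j = Some x \<Longrightarrow> x < N"
  proof -
    fix i j x assume "H1 i j = Some x"
    then show "x < N" using hg1 unfolding hourglass_def partial_array_def by (elim conjE) blast
  qed
  have fill1: "\<forall>i<N. \<forall>j<N. (H1 i j \<noteq> None \<longleftrightarrow> (i = 0 \<or> i = N - 1 \<or> j = i \<or> j = N - 1 - i))"
    using hg1 unfolding hourglass_def by (elim conjE) assumption
  have rowinj1: "\<forall>i j j' x. H1 i j = Some x \<and> H1 i j' = Some x \<longrightarrow> j = j'"
    using hg1 unfolding hourglass_def by (elim conjE) assumption
  have row02: "\<forall>j<N. H2 0 j = Some j" using hg2 unfolding hourglass_def by blast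
  define t where "t = relabel_tau N (Tmap N \<pi> \<rho> H1)"
  have H2e: "\<And>p q. p < N \<Longrightarrow> q < N \<Longrightarrow> H2 p q = map_option t (H1 (pi p) (ri q))"
    unfolding H2 mu_def t_def Tmap_def pi_def ri_def by simp
  have muat: "\<And>i j. i < N \<Longrightarrow> j < N \<Longrightarrow> H2 (\<pi> i) (\<rho> j) = map_option t (H1 i j)"
    using H2e pf rf by simp
  define g where "g j = the (H1 (pi 0) (ri j))" for j
  have gS: "\<And>j. j < N \<Longrightarrow> H1 (pi 0) (ri j) = Some (g j)"
  proof -
    fix j assume j: "j < N"
    have "ri j < N" using rf j by auto
    then have "H1 (pi 0) (ri j) \<noteq> None" using fill1 r0 N0 by auto
    then show "H1 (pi 0) (ri j) = Some (g j)" unfolding g_def by auto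
  qed
  have tg: "\<And>j. j < N \<Longrightarrow> t (g j) = j"
    using gS H2e[of 0] row02 N0 by fastforce
  have gN: "\<And>j. j < N \<Longrightarrow> g j < N" using gS pa1 by blast
  have ginj: "inj_on g ?S"
  proof (rule inj_onI)
    fix j j' assume "j \<in> ?S" "j' \<in> ?S" "g j = g j'"
    then show "j = j'" using tg by (metis atLeastLessThan_iff)
  qed
  have gim: "g ` ?S = ?S" using gN by (intro endo_inj_surj[OF _ _ ginj]) auto
  have tb: "bij_betw t ?S ?S"
    unfolding bij_betw_iff_bijections
  proof (intro exI[of _ g] conjI ballI)
    fix x assume x: "x \<in> ?S"
    then obtain j where j: "j \<in> ?S" "x = g j" using gim by (metis imageE)
    show "t x \<in> ?S" using j tg by auto
    show "g (t x) = x" using j tg by auto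
  next
    fix y assume "y \<in> ?S"
    then show "g y \<in> ?S" "t (g y) = y" using gN tg by auto
  qed
  define s where "s = the_inv_into ?S t"
  note tf = inv_facts[OF tb, folded s_def]
  define A1 where "A1 = {L. diag_latin N L \<and> normalized N L \<and> agrees N H1 L}"
  define A2 where "A2 = {L. diag_latin N L \<and> normalized N L \<and> agrees N H2 L}"
  define Phi where "Phi L = sq N (\<lambda>p q. t (L!(pi p)!(ri q)))" for L
  define Psi where "Psi L = sq N (\<lambda>i j. s (L!(\<pi> i)!(\<rho> j)))" for L
  have entries: "L!i!j < N" if L: "diag_latin N L" and ij: "i < N" "j < N" for L i j
  proof -
    have "bij_betw (\<lambda>j. L!i!j) ?S ?S" using L ij by (simp add: diag_latin_def)
    moreover have "j \<in> ?S" using ij by simp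
    ultimately have "L!i!j \<in> ?S" by (rule bij_betwE[rule_format])
    then show ?thesis by simp
  qed
  have dl: "\<And>L. diag_latin N L \<Longrightarrow> length L = N \<and> (\<forall>i<N. length (L!i) = N)"
    unfolding diag_latin_def by auto
  have "bij_betw Phi A1 A2"
  proof (rule bij_betw_byWitness[where f'=Psi])
    show "\<forall>a\<in>A1. Psi (Phi a) = a"
    proof
      fix L assume "L \<in> A1"
      then have L: "diag_latin N L" by (simp add: A1_def)
      show "Psi (Phi L) = L" unfolding Psi_def Phi_def
        by (rule sq_eq) (use dl[OF L] entries[OF L] pf rf tf in \<open>auto simp: sq_nth\<close>)
    qed
    show "\<forall>a\<in>A2. Phi (Psi a) = a"
    proof
      fix L assume "L \<in> A2"
      then have L: "diag_latin N L" by (simp add: A2_def)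
      show "Phi (Psi L) = L" unfolding Psi_def Phi_def
        by (rule sq_eq) (use dl[OF L] entries[OF L] pf rf tf in \<open>auto simp: sq_nth\<close>)
    qed
    show "Phi ` A1 \<subseteq> A2"
    proof
      fix M assume "M \<in> Phi ` A1"
      then obtain L where L: "diag_latin N L" "agrees N H1 L" and M: "M = Phi L"
        by (auto simp: A1_def)
      have d: "diag_latin N M" unfolding M Phi_def
        by (rule diag_transform[OF L(1) tb pf(5) rf(5) pir rirel])
      have a: "agrees N H2 M"
        unfolding agrees_def
      proof (intro allI impI)
        fix p q x assume pq: "p < N" "q < N" and hx: "H2 p q = Some x"
        then obtain y where y: "H1 (pi p) (ri q) = Some y" "t y = x" using H2e by auto
        have "L!(pi p)!(ri q) = y" using L(2) y pq pf rf unfolding agrees_def by auto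
        then show "M ! p ! q = x" using pq y by (simp add: M Phi_def sq_nth)
      qed
      show "M \<in> A2" using d a agrees_norm[OF hg2 a] by (simp add: A2_def)
    qed
    show "Psi ` A2 \<subseteq> A1"
    proof
      fix M assume "M \<in> Psi ` A2"
      then obtain L where L: "diag_latin N L" "agrees N H2 L" and M: "M = Psi L"
        by (auto simp: A2_def)
      have d: "diag_latin N M" unfolding M Psi_def
        by (rule diag_transform[OF L(1) tf(5) pb rb pr rel])
      have a: "agrees N H1 M"
        unfolding agrees_def
      proof (intro allI impI)
        fix i j x assume ij: "i < N" "j < N" and hx: "H1 i j = Some x"
        have "H2 (\<pi> i) (\<rho> j) = Some (t x)" using muat[OF ij] hx by simp
        then have "L!(\<pi> i)!(\<rho> j) = t x" using L(2) ij pf rf unfolding agrees_def by auto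
        moreover have "x < N" using pa1 hx by blast
        ultimately show "M ! i ! j = x" using ij tf by (simp add: M Psi_def sq_nth)
      qed
      show "M \<in> A1" using d a agrees_norm[OF hg1 a] by (simp add: A1_def)
    qed
  qed
  then show ?thesis unfolding count_ndls_def A1_def[symmetric] A2_def[symmetric]
    by (rule bij_betw_same_card)
qed

end
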